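(* Every prime ideal of $C(X)_\mathcal{P}$ is either an essential ideal, or a maximal ideal which is also a minimal prime ideal.
   Context: Let $(X,\tau)$ be a $T_1$ topological space and $\mathcal{P}$ an ideal of closed subsets of $X$ (a nonempty family of closed sets closed under finite unions and under taking closed subsets). For $f\colon X\to\mathbb{R}$, $D_f$ denotes the set of points of discontinuity of $f$, and $C(X)_\mathcal{P}=\{f\colon X\to\mathbb{R} : \overline{D_f}\in\mathcal{P}\}$, a commutative ring with unity under pointwise operations. An ideal is essential if it intersects every nonzero ideal nontrivially. *)

theory Defs
  imports "HOL-Analysis.Analysis" "HOL-Algebra.Ideal"
begin

definition closed_set_ideal :: "'a::topological_space set set \<Rightarrow> bool" where
  "closed_set_ideal \<P> \<longleftrightarrow> \<P> \<noteq> {} \<and> (\<forall>A\<in>\<P>. closed A)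
     \<and> (\<forall>A\<in>\<P>. \<forall>B\<in>\<P>. A \<union> B \<in> \<P>)
     \<and> (\<forall>A\<in>\<P>. \<forall>B. closed B \<and> B \<subseteq> A \<longrightarrow> B \<in> \<P>)"

definition discont_set :: "('a::topological_space \<Rightarrow> real) \<Rightarrow> 'a set" where
  "discont_set f = {x. \<not> (f \<longlongrightarrow> f x) (at x)}"

definition CXP :: "'a::topological_space set set \<Rightarrow> ('a \<Rightarrow> real) set" where
  "CXP \<P> = {f. closure (discont_set f) \<in> \<P>}"

definition CXP_ring :: "'a::topological_space set set \<Rightarrow> ('a \<Rightarrow> real) ring" where
  "CXP_ring \<P> = \<lparr>carrier = CXP \<P>, monoid.mult = (\<lambda>f g x. f x * g x), one = (\<lambda>x. 1),
     zero = (\<lambda>x. 0), add = (\<lambda>f g x. f x + g x)\<rparr>"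

definition essential_ideal :: "'b set \<Rightarrow> ('b, 'm) ring_scheme \<Rightarrow> bool" where
  "essential_ideal I R \<longleftrightarrow> ideal I R \<and>
     (\<forall>J. ideal J R \<and> J \<noteq> {\<zero>\<^bsub>R\<^esub>} \<longrightarrow> I \<inter> J \<noteq> {\<zero>\<^bsub>R\<^esub>})"

definition minimal_prime_ideal :: "'b set \<Rightarrow> ('b, 'm) ring_scheme \<Rightarrow> bool" where
  "minimal_prime_ideal I R \<longleftrightarrow> primeideal I R \<and>
     (\<forall>J. primeideal J R \<and> J \<subseteq> I \<longrightarrow> J = I)"

end

theory Submission
  imports Defs
begin

lemma CXP_comp:
  assumes P: "closed_set_ideal \<P>" and g: "g \<in> CXP \<P>" and phi: "continuous_on UNIV \<phi>"
  shows "(\<lambda>x. \<phi> (g x)) \<in> CXP \<P>"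
proof -
  have sub: "discont_set (\<lambda>x. \<phi> (g x)) \<subseteq> discont_set g"
  proof
    fix x assume "x \<in> discont_set (\<lambda>x. \<phi> (g x))"
    moreover have "isCont \<phi> (g x)" using phi continuous_on_eq_continuous_at by blast
    ultimately show "x \<in> discont_set g"
      unfolding discont_set_def using isCont_tendsto_compose by blast
  qed
  have "closure (discont_set (\<lambda>x. \<phi> (g x))) \<subseteq> closure (discont_set g)"
    using sub closure_mono by blast
  moreover have "closure (discont_set g) \<in> \<P>" using g by (simp add: CXP_def)
  ultimately show ?thesis using P unfolding closed_set_ideal_def CXP_def by blast
qed

theorem corollary2p17:
  fixes \<P> :: "'a::t1_space set set" and I :: "('a \<Rightarrow> real) set"
  assumes "closed_set_ideal \<P>"
    and "primeideal I (CXP_ring \<P>)"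
  shows "essential_ideal I (CXP_ring \<P>) \<or>
         (maximalideal I (CXP_ring \<P>) \<and> minimal_prime_ideal I (CXP_ring \<P>))"
proof (cases "essential_ideal I (CXP_ring \<P>)")
  case True then show ?thesis by blast
next
  case False
  define R where "R = CXP_ring \<P>"
  have Pc: "closed_set_ideal \<P>" by fact
  interpret primeideal I R using assms(2) R_def by simp
  have mult: "a \<otimes>\<^bsub>R\<^esub> b = (\<lambda>x. a x * b x)" for a b by (simp add: R_def CXP_ring_def)
  have add: "a \<oplus>\<^bsub>R\<^esub> b = (\<lambda>x. a x + b x)" for a b by (simp add: R_def CXP_ring_def)
  have zero: "\<zero>\<^bsub>R\<^esub> = (\<lambda>x. 0)" by (simp add: R_def CXP_ring_def)
  have one: "\<one>\<^bsub>R\<^esub> = (\<lambda>x. 1)" by (simp add: R_def CXP_ring_def)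
  have carr: "carrier R = CXP \<P>" by (simp add: R_def CXP_ring_def)
  have comp: "h \<in> carrier R \<Longrightarrow> continuous_on UNIV \<phi> \<Longrightarrow> (\<lambda>x. \<phi> (h x)) \<in> carrier R" for h \<phi>
    using CXP_comp[OF Pc] carr by metis
  obtain J where J: "ideal J R" "J \<noteq> {\<zero>\<^bsub>R\<^esub>}" "I \<inter> J = {\<zero>\<^bsub>R\<^esub>}"
    using False is_ideal unfolding essential_ideal_def R_def by blast
  have "\<zero>\<^bsub>R\<^esub> \<in> J" by (rule additive_subgroup.zero_closed[OF ideal.axioms(1)[OF J(1)]])
  moreover have "J \<noteq> {\<zero>\<^bsub>R\<^esub>}" by (rule J(2))
  ultimately have "\<exists>f. f \<in> J \<and> f \<noteq> \<zero>\<^bsub>R\<^esub>" by (metis insertI1 subsetI subset_antisym singletonD)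
  then obtain f where f: "f \<in> J" "f \<noteq> \<zero>\<^bsub>R\<^esub>" by blast
  have fc: "f \<in> carrier R" by (rule ideal.Icarr[OF J(1) f(1)])
  have fnI: "f \<notin> I"
  proof
    assume "f \<in> I"
    then have "f \<in> I \<inter> J" using f(1) by simp
    then have "f = \<zero>\<^bsub>R\<^esub>" using J(3) by simp
    then show False using f(2) by simp
  qed
  have ann: "f x * g x = 0" if "g \<in> I" for g x
  proof -
    have "f \<otimes>\<^bsub>R\<^esub> g \<in> I" by (rule I_l_closed[OF that fc])
    moreover have "f \<otimes>\<^bsub>R\<^esub> g \<in> J" by (rule ideal.I_r_closed[OF J(1) f(1) Icarr[OF that]])
    ultimately have "f \<otimes>\<^bsub>R\<^esub> g \<in> I \<inter> J" by simp
    then have "f \<otimes>\<^bsub>R\<^esub> g = \<zero>\<^bsub>R\<^esub>" using J(3) by simp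
    then show ?thesis using mult zero by metis
  qed
  have zI: "\<zero>\<^bsub>R\<^esub> \<in> I" by (simp add: additive_subgroup.zero_closed is_additive_subgroup)
  have annI: "g \<in> I" if "g \<in> carrier R" "\<And>x. f x * g x = 0" for g
  proof -
    have "f \<otimes>\<^bsub>R\<^esub> g = \<zero>\<^bsub>R\<^esub>" using that mult zero by auto
    then show ?thesis using I_prime[OF fc that(1)] zI fnI by auto
  qed
  have noless: "\<not> (h x)^2 < (h y)^2" if h: "h \<in> carrier R" and fx: "f x \<noteq> 0" and fy: "f y \<noteq> 0" for h x y
  proof
    assume lt: "(h x)^2 < (h y)^2"
    define t where "t = ((h x)^2 + (h y)^2) / 2"
    define g1 where "g1 = (\<lambda>z. max ((h z)^2 - t) 0)"
    define g2 where "g2 = (\<lambda>z. min ((h z)^2 - t) 0)"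
    have g1c: "g1 \<in> carrier R" unfolding g1_def
      by (rule comp[OF h, of "\<lambda>u. max (u^2 - t) 0"]) (intro continuous_intros)
    have g2c: "g2 \<in> carrier R" unfolding g2_def
      by (rule comp[OF h, of "\<lambda>u. min (u^2 - t) 0"]) (intro continuous_intros)
    have "g1 \<otimes>\<^bsub>R\<^esub> g2 = \<zero>\<^bsub>R\<^esub>" unfolding mult zero g1_def g2_def
      by (rule ext) (simp add: max_def min_def)
    then have "g1 \<in> I \<or> g2 \<in> I" using I_prime[OF g1c g2c] zI by simp
    then show False
    proof
      assume "g1 \<in> I"
      then have "f y * g1 y = 0" by (rule ann)
      then have "g1 y = 0" using fy by simp
      then show False using lt unfolding g1_def t_def by (simp add: max_def split: if_splits)
    next
      assume "g2 \<in> I"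
      then have "f x * g2 x = 0" by (rule ann)
      then have "g2 x = 0" using fx by simp
      then show False using lt unfolding g2_def t_def by (simp add: min_def split: if_splits)
    qed
  qed
  obtain x0 where x0: "f x0 \<noteq> 0" using f(2) zero by fastforce
  have const: "f x \<noteq> 0 \<Longrightarrow> (h x)^2 = (h x0)^2" if "h \<in> carrier R" for h x
    using noless[OF that, of x x0] noless[OF that, of x0 x] x0 by linarith
  have maxi: "maximalideal I R"
  proof (rule maximalidealI[OF is_ideal I_notcarr])
    fix K assume K: "ideal K R" "I \<subseteq> K" "K \<subseteq> carrier R"
    show "K = I \<or> K = carrier R"
    proof (cases "K = I")
      case True then show ?thesis by simp
    next
      case False
      then obtain h where h: "h \<in> K" "h \<notin> I" using K(2) by blast
      have hc: "h \<in> carrier R" using h K(3) by blast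
      define c where "c = (h x0)^2"
      have cne: "c \<noteq> 0"
      proof
        assume "c = 0"
        then have "f x * h x = 0" for x using const[OF hc, of x] c_def by auto
        then show False using annI[OF hc] h(2) by blast
      qed
      define k where "k = (\<lambda>x. h x / c)"
      define u where "u = (\<lambda>x. 1 - (h x)^2 / c)"
      have kc: "k \<in> carrier R" unfolding k_def
        by (rule comp[OF hc, of "\<lambda>v. v / c"]) (intro continuous_intros, simp add: cne)
      have uc: "u \<in> carrier R" unfolding u_def
        by (rule comp[OF hc, of "\<lambda>v. 1 - v^2 / c"]) (intro continuous_intros, simp add: cne)
      have "f x * u x = 0" for x
      proof (cases "f x = 0")
        case False
        then have "(h x)^2 = c" using const[OF hc, of x] c_def by simp
        then show ?thesis using cne unfolding u_def by simp
      qed simp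
      then have "u \<in> I" using annI[OF uc] by blast
      then have uK: "u \<in> K" using K(2) by blast
      have hkK: "h \<otimes>\<^bsub>R\<^esub> k \<in> K" using ideal.I_r_closed[OF K(1) h(1) kc] .
      have "(h \<otimes>\<^bsub>R\<^esub> k) \<oplus>\<^bsub>R\<^esub> u \<in> K"
        by (rule additive_subgroup.a_closed[OF ideal.axioms(1)[OF K(1)] hkK uK])
      moreover have "(h \<otimes>\<^bsub>R\<^esub> k) \<oplus>\<^bsub>R\<^esub> u = \<one>\<^bsub>R\<^esub>"
        unfolding mult add one k_def u_def by (rule ext) (simp add: power2_eq_square)
      ultimately have "\<one>\<^bsub>R\<^esub> \<in> K" by simp
      then show ?thesis using ideal.one_imp_carrier[OF K(1)] by blast
    qed
  qed
  have mini: "minimal_prime_ideal I R"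
    unfolding minimal_prime_ideal_def
  proof (intro conjI allI impI)
    show "primeideal I R" by (rule primeideal)
    fix Q assume Q: "primeideal Q R \<and> Q \<subseteq> I"
    have "I \<subseteq> Q"
    proof
      fix g assume g: "g \<in> I"
      have "f \<otimes>\<^bsub>R\<^esub> g = \<zero>\<^bsub>R\<^esub>" using ann[OF g] mult zero by auto
      moreover have "\<zero>\<^bsub>R\<^esub> \<in> Q"
        by (rule additive_subgroup.zero_closed[OF ideal.axioms(1)[OF primeideal.axioms(1)[OF conjunct1[OF Q]]]])
      ultimately have "f \<in> Q \<or> g \<in> Q"
        using primeideal.I_prime[of Q R f g] Q fc Icarr[OF g] by auto
      then show "g \<in> Q" using fnI Q by blast
    qed
    then show "Q = I" using Q by blast
  qed
  show ?thesis using maxi mini R_def by simp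
qed

end
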